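(* Let $\mathcal{A}$ be a finite-dimensional real associative unital algebra with a norm $\|\cdot\|$ satisfying $\|x\star y\|\le m_{\mathcal{A}}\|x\|\|y\|$ for some constant $m_{\mathcal{A}}>0$. If $f(z)=\sum_n c_n\star z^n$ is an entire function on $\mathcal{A}$, then $\limsup_{n\to\infty}\sqrt[n]{\|c_n\|}=0$, and consequently the series for $f$ is uniformly absolutely convergent on $\{z:\|z\|<L\}$ for every $L>0$.
   Context: $f$ entire means the power series $\sum c_n\star z^n$ ($c_n\in\mathcal{A}$) converges for every $z\in\mathcal{A}$. A series of functions $\sum g_n$ is uniformly absolutely convergent on $E$ if it converges absolutely at each point of $E$ and it (and $\sum\|g_n\|$) converges uniformly on $E$. *)

theory Defs
  imports "HOL-Analysis.Analysis" "HOL-Library.Liminf_Limsup"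
begin

definition unif_abs_conv_on :: "'b set \<Rightarrow> (nat \<Rightarrow> 'b \<Rightarrow> 'a::real_normed_vector) \<Rightarrow> bool" where
  "unif_abs_conv_on E g \<longleftrightarrow>
     (\<forall>z\<in>E. summable (\<lambda>n. norm (g n z))) \<and>
     uniform_limit E (\<lambda>N z. \<Sum>n<N. g n z) (\<lambda>z. \<Sum>n. g n z) sequentially \<and>
     uniform_limit E (\<lambda>N z. \<Sum>n<N. norm (g n z)) (\<lambda>z. \<Sum>n. norm (g n z)) sequentially"

end

theory Submission
  imports Defs
begin

lemma my_summable_norm:
  fixes f :: "nat \<Rightarrow> 'a::real_normed_vector"
  assumes "summable f" "summable (\<lambda>n. norm (f n))"
  shows "norm (suminf f) \<le> (\<Sum>n. norm (f n))"
proof (rule LIMSEQ_le)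
  show "(\<lambda>n. norm (\<Sum>i<n. f i)) \<longlonglongrightarrow> norm (suminf f)"
    by (intro tendsto_norm summable_LIMSEQ assms(1))
  show "(\<lambda>n. \<Sum>i<n. norm (f i)) \<longlonglongrightarrow> (\<Sum>n. norm (f n))"
    by (intro summable_LIMSEQ assms(2))
  show "\<exists>N. \<forall>n\<ge>N. norm (\<Sum>i<n. f i) \<le> (\<Sum>i<n. norm (f i))"
    by (auto intro: norm_sum)
qed

lemma my_m_test:
  fixes f :: "nat \<Rightarrow> 'b \<Rightarrow> 'a::real_normed_vector"
  assumes S: "\<And>x. x \<in> A \<Longrightarrow> summable (\<lambda>n. f n x)"
    and B: "\<And>n x. x \<in> A \<Longrightarrow> norm (f n x) \<le> M n" and M: "summable M"
  shows "uniform_limit A (\<lambda>N x. \<Sum>n<N. f n x) (\<lambda>x. \<Sum>n. f n x) sequentially"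
proof (rule uniform_limitI)
  fix e :: real assume e: "0 < e"
  obtain N where N: "\<And>n. n \<ge> N \<Longrightarrow> norm (\<Sum>i. M (i + n)) < e"
    using suminf_exist_split[OF e M] by blast
  show "\<forall>\<^sub>F n in sequentially. \<forall>x\<in>A. dist (\<Sum>n<n. f n x) (\<Sum>n. f n x) < e"
    unfolding eventually_sequentially
  proof (intro exI allI impI ballI)
    fix n x assume n: "N \<le> n" and x: "x \<in> A"
    have sM: "summable (\<lambda>i. M (i + n))" using M summable_ignore_initial_segment by blast
    have sf: "summable (\<lambda>i. f (i + n) x)" using S[OF x] summable_ignore_initial_segment by blast
    have snf: "summable (\<lambda>i. norm (f (i + n) x))"
      by (rule summable_comparison_test[OF _ sM]) (use B[OF x] in auto)
    have "dist (\<Sum>n<n. f n x) (\<Sum>n. f n x) = norm (\<Sum>i. f (i + n) x)"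
      using suminf_minus_initial_segment[OF S[OF x], of n] by (simp add: dist_norm norm_minus_commute)
    also have "\<dots> \<le> (\<Sum>i. norm (f (i + n) x))" by (rule my_summable_norm[OF sf snf])
    also have "\<dots> \<le> (\<Sum>i. M (i + n))" by (rule suminf_le[OF _ snf sM]) (use B[OF x] in auto)
    also have "\<dots> \<le> norm (\<Sum>i. M (i + n))" by simp
    also have "\<dots> < e" using N[OF n] .
    finally show "dist (\<Sum>n<n. f n x) (\<Sum>n. f n x) < e" .
  qed
qed

lemma norm_pow_le:
  fixes z :: "'a :: {real_normed_vector, real_algebra_1}"
  assumes m: "m > 0" and nm: "\<And>x y :: 'a. norm (x * y) \<le> m * norm x * norm y"
  shows "norm (z ^ n) \<le> norm (1::'a) * (m * norm z) ^ n"
proof (induction n)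
  case 0 then show ?case by simp
next
  case (Suc n)
  have "norm (z ^ Suc n) \<le> m * norm z * norm (z ^ n)" using nm[of z "z^n"] by simp
  also have "\<dots> \<le> m * norm z * (norm (1::'a) * (m * norm z) ^ n)"
    using Suc m by (intro mult_left_mono) auto
  finally show ?case by (simp add: algebra_simps)
qed

theorem theorem5p24:
  fixes c :: "nat \<Rightarrow> 'a :: {real_normed_vector, real_algebra_1}" and m :: real
  assumes findim: "\<exists>B. finite B \<and> span B = (UNIV :: 'a set)"
    and m_pos: "m > 0"
    and norm_mult: "\<And>x y :: 'a. norm (x * y) \<le> m * norm x * norm y"
    and entire: "\<And>z :: 'a. summable (\<lambda>n. c n * z ^ n)"
  shows "limsup (\<lambda>n. ereal (root n (norm (c n)))) = 0 \<and>
         (\<forall>L>0. unif_abs_conv_on {z :: 'a. norm z < L} (\<lambda>n z. c n * z ^ n))"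
proof -
  have key: "eventually (\<lambda>n. norm (c n) * t ^ n \<le> 1) sequentially" if t: "t > 0" for t :: real
  proof -
    have eq: "norm (c n * of_real t ^ n) = norm (c n) * t ^ n" for n
    proof -
      have "c n * of_real t ^ n = c n * of_real (t ^ n)" by (simp only: of_real_power)
      also have "\<dots> = (t ^ n) *\<^sub>R c n" by (simp only: of_real_def mult_scaleR_right mult_1_right)
      finally show ?thesis using t by simp
    qed
    have "(\<lambda>n. c n * of_real t ^ n) \<longlonglongrightarrow> 0" by (rule summable_LIMSEQ_zero[OF entire])
    hence "(\<lambda>n. norm (c n * of_real t ^ n)) \<longlonglongrightarrow> 0" by (rule tendsto_norm_zero)
    hence "eventually (\<lambda>n. norm (c n * of_real t ^ n) < 1) sequentially"
      by (rule order_tendstoD) simp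
    thus ?thesis by eventually_elim (simp add: eq)
  qed
  have ls: "limsup (\<lambda>n. ereal (root n (norm (c n)))) = 0"
  proof (rule antisym)
    show "limsup (\<lambda>n. ereal (root n (norm (c n)))) \<le> 0"
    proof (rule ereal_le_epsilon)
      fix e :: ereal assume "0 < e"
      show "limsup (\<lambda>n. ereal (root n (norm (c n)))) \<le> 0 + e"
      proof (cases e)
        case (real r)
        with \<open>0 < e\<close> have r: "r > 0" by simp
        have "eventually (\<lambda>n. norm (c n) * (1/r) ^ n \<le> 1 \<and> n > 0) sequentially"
          using r by (intro eventually_conj key eventually_gt_at_top) simp
        hence "eventually (\<lambda>n. ereal (root n (norm (c n))) \<le> e) sequentially"
        proof eventually_elim
          case (elim n)
          have "norm (c n) \<le> r ^ n" using elim r by (simp add: field_simps power_divide)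
          hence "root n (norm (c n)) \<le> root n (r ^ n)" using elim by (intro real_root_le_mono) auto
          also have "\<dots> = r" using elim r by (simp add: real_root_pos2)
          finally show ?case using real by simp
        qed
        thus ?thesis by (simp add: Limsup_bounded)
      qed (use \<open>0 < e\<close> in auto)
    qed
    show "0 \<le> limsup (\<lambda>n. ereal (root n (norm (c n))))"
      by (rule le_Limsup) (auto intro!: always_eventually real_root_ge_zero)
  qed
  have uc: "unif_abs_conv_on {z :: 'a. norm z < L} (\<lambda>n z. c n * z ^ n)" if L: "L > 0" for L
  proof -
    define R where "R = m * L"
    have R: "R > 0" using L m_pos by (simp add: R_def)
    define M where "M n = m * norm (1::'a) * (norm (c n) * R ^ n)" for n
    have sM0: "summable (\<lambda>n. norm (c n) * R ^ n)"
    proof (rule summable_comparison_test_ev[of _ "\<lambda>n. (1/2) ^ n"])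
      show "summable (\<lambda>n. (1/2::real) ^ n)" by (simp add: summable_geometric)
      have "eventually (\<lambda>n. norm (c n) * (2*R) ^ n \<le> 1) sequentially"
        using key[of "2*R"] R by simp
      then show "eventually (\<lambda>n. norm (norm (c n) * R ^ n) \<le> (1/2) ^ n) sequentially"
      proof eventually_elim
        case (elim n)
        have "norm (c n) * R ^ n * 2 ^ n \<le> 1" using elim by (simp add: power_mult_distrib algebra_simps)
        thus ?case using R by (simp add: power_divide field_simps)
      qed
    qed
    have sM: "summable M" unfolding M_def by (intro summable_mult sM0)
    have B: "norm (c n * z ^ n) \<le> M n" if z: "z \<in> {z. norm z < L}" for n z
    proof -
      have "norm (c n * z ^ n) \<le> m * norm (c n) * norm (z ^ n)" by (rule norm_mult)
      also have "\<dots> \<le> m * norm (c n) * (norm (1::'a) * (m * norm z) ^ n)"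
        using m_pos by (intro mult_left_mono norm_pow_le[OF m_pos norm_mult]) auto
      also have "\<dots> \<le> m * norm (c n) * (norm (1::'a) * R ^ n)"
        using m_pos z unfolding R_def
        by (intro mult_left_mono power_mono) auto
      finally show ?thesis by (simp add: M_def algebra_simps)
    qed
    have sn: "summable (\<lambda>n. norm (c n * z ^ n))" if "z \<in> {z. norm z < L}" for z
      by (rule summable_comparison_test[OF _ sM]) (use B[OF that] in auto)
    show ?thesis unfolding unif_abs_conv_on_def
    proof (intro conjI ballI)
      show "\<And>z. z \<in> {z. norm z < L} \<Longrightarrow> summable (\<lambda>n. norm (c n * z ^ n))" by (rule sn)
      show "uniform_limit {z. norm z < L} (\<lambda>N z. \<Sum>n<N. c n * z ^ n) (\<lambda>z. \<Sum>n. c n * z ^ n) sequentially"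
        by (rule my_m_test[OF entire B sM])
      show "uniform_limit {z. norm z < L} (\<lambda>N z. \<Sum>n<N. norm (c n * z ^ n)) (\<lambda>z. \<Sum>n. norm (c n * z ^ n)) sequentially"
        by (rule my_m_test[OF sn _ sM]) (use B in auto)
    qed
  qed
  show ?thesis using ls uc by blast
qed

end
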